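(* Let $F\ge1$ and let $n_1,\dots,n_F$ be positive integers with $n_1\ge2$. With $p_a,q_a,r,r^{(2)}$ as in the context, define $$A_F=\sum_{a=1}^{F-1}(-1)^{a+1}\frac{1}{p_aq_a}+(-1)^{F+1}\frac{1}{p_F r}.$$ Then $A_F=r^{(2)}/r$.
   Context: For $1\le k\le a\le F$, let $p^{(k)}_a/q^{(k)}_a$ (coprime positive integers) equal the continued fraction $[n_a,\dots,n_k]:=1/(n_a+1/(n_{a-1}+\cdots+1/n_k))$, $[n_k]=1/n_k$; write $p_a=p^{(1)}_a$, $q_a=q^{(1)}_a$. Set $r^{(k)}=p^{(k)}_F+q^{(k)}_F$ for $1\le k\le F$, $r^{(F+1)}=1$, and $r=r^{(1)}$ (so $r^{(2)}=1$ when $F=1$). *)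

theory Defs
  imports Complex_Main
begin

text \<open>The continued fraction [n_a, ..., n_k] = 1/(n_a + 1/(n_{a-1} + ... + 1/n_k)),
  with [n_k] = 1/n_k, as a rational number (for k \<le> a).\<close>
fun cfrac :: "(nat \<Rightarrow> nat) \<Rightarrow> nat \<Rightarrow> nat \<Rightarrow> rat" where
  "cfrac n k a = (if a \<le> k then 1 / of_nat (n k)
                  else 1 / (of_nat (n a) + cfrac n k (a - 1)))"

definition pk :: "(nat \<Rightarrow> nat) \<Rightarrow> nat \<Rightarrow> nat \<Rightarrow> int" where
  "pk n k a = fst (quotient_of (cfrac n k a))"

definition qk :: "(nat \<Rightarrow> nat) \<Rightarrow> nat \<Rightarrow> nat \<Rightarrow> int" where
  "qk n k a = snd (quotient_of (cfrac n k a))"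

definition rk :: "(nat \<Rightarrow> nat) \<Rightarrow> nat \<Rightarrow> nat \<Rightarrow> int" where
  "rk n F k = (if k = F + 1 then 1 else pk n k F + qk n k F)"

end

theory Submission
  imports Defs
begin

lemma qo_eq:
  assumes "b > 0" "coprime a b"
  shows "quotient_of (of_int a / of_int b) = (a, b)"
proof -
  have "of_int a / of_int b = Fract a b" by (simp add: Fract_of_int_quotient)
  moreover have "quotient_of (Fract a b) = (a, b)"
    unfolding quotient_of_def
    by (rule the1_equality[OF quotient_of_unique]) (use assms in simp)
  ultimately show ?thesis by simp
qed

declare cfrac.simps[simp del]

lemma algA: fixes h h' q q' :: real assumes "q > 0" "q + q' > 0"
  shows "h/q + (h'*q - h*q')*(1/(q*(q+q'))) = (h+h')/(q+q')"
proof -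
  have nz: "q \<noteq> 0" "q + q' \<noteq> 0" using assms by auto
  have "h/q = h*(q+q')/(q*(q+q'))" using nz by simp
  then have "h/q + (h'*q - h*q')*(1/(q*(q+q'))) = (h*(q+q') + (h'*q - h*q'))/(q*(q+q'))"
    by (simp add: add_divide_distrib)
  also have "h*(q+q') + (h'*q - h*q') = (h+h')*q" by (simp add: algebra_simps)
  also have "(h+h')*q/(q*(q+q')) = (h+h')/(q+q')" using nz by simp
  finally show ?thesis .
qed

lemma algB: fixes h h2 q q2 :: real assumes "q > 0" "q2 > 0"
  shows "h/q + (h2*q - h*q2)*(1/(q*q2)) = h2/q2"
  using assms by (simp add: field_simps)

fun QQ :: "(nat \<Rightarrow> nat) \<Rightarrow> nat \<Rightarrow> int" where
  "QQ n 0 = 0" | "QQ n (Suc 0) = 1"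
| "QQ n (Suc (Suc a)) = int (n (Suc a)) * QQ n (Suc a) + QQ n a"

fun HH :: "(nat \<Rightarrow> nat) \<Rightarrow> nat \<Rightarrow> int" where
  "HH n 0 = 1" | "HH n (Suc 0) = 0"
| "HH n (Suc (Suc a)) = int (n (Suc a)) * HH n (Suc a) + HH n a"

lemma det: "HH n (Suc a) * QQ n a - HH n a * QQ n (Suc a) = (-1) ^ (a+1)"
proof (induction a)
  case 0 then show ?case by simp
next
  case (Suc a)
  have "HH n (Suc (Suc a)) * QQ n (Suc a) - HH n (Suc a) * QQ n (Suc (Suc a))
      = -(HH n (Suc a) * QQ n a - HH n a * QQ n (Suc a))"
    by (simp add: algebra_simps)
  then show ?case using Suc by simp
qed

lemma QQ_nonneg: "QQ n a \<ge> 0"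
  by (induction n a rule: QQ.induct) auto

lemma HH_nonneg: "HH n a \<ge> 0"
  by (induction n a rule: HH.induct) auto

lemma QQ_mono2: "QQ n a \<le> QQ n (Suc (Suc a))"
  using QQ_nonneg[of n "Suc a"] by simp

lemma HH_mono2: "HH n a \<le> HH n (Suc (Suc a))"
  using HH_nonneg[of n "Suc a"] by simp

lemma QQ_pos: assumes "n 1 > 0" "a \<ge> 1" shows "QQ n a > 0"
  using assms(2)
proof (induction a rule: nat_less_induct)
  case (1 a)
  show ?case
  proof (cases "a \<le> 2")
    case True
    then have "a = 1 \<or> a = 2" using 1(2) by auto
    then show ?thesis using assms(1) by (auto simp: numeral_2_eq_2)
  next
    case False
    define b where "b = a - 2"
    have b: "a = Suc (Suc b)" "b \<ge> 1" using False unfolding b_def by auto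
    have "QQ n b > 0" using 1(1) b by auto
    then show ?thesis using QQ_mono2[of n b] b by auto
  qed
qed

lemma HH_pos: assumes "n 2 > 0" "a \<ge> 2" shows "HH n a > 0"
  using assms(2)
proof (induction a rule: nat_less_induct)
  case (1 a)
  show ?case
  proof (cases "a \<le> 3")
    case True
    then have "a = 2 \<or> a = 3" using 1(2) by auto
    then show ?thesis using assms(1) by (auto simp: numeral_2_eq_2 numeral_3_eq_3)
  next
    case False
    define b where "b = a - 2"
    have b: "a = Suc (Suc b)" "b \<ge> 2" using False unfolding b_def by auto
    have "HH n b > 0" using 1(1) b by auto
    then show ?thesis using HH_mono2[of n b] b by auto
  qed
qed

lemma cf1: assumes "n 1 > 0" "a \<ge> 1"
  shows "cfrac n 1 a = of_int (QQ n a) / of_int (QQ n (Suc a))"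
  using assms(2)
proof (induction a rule: dec_induct)
  case base
  then show ?case by (subst cfrac.simps) (simp add: numeral_2_eq_2)
next
  case (step a)
  have p1: "QQ n (Suc a) > 0" using QQ_pos[of n, OF assms(1)] by simp
  have "cfrac n 1 (Suc a) = 1 / (of_nat (n (Suc a)) + cfrac n 1 a)"
    using step(1) by (subst cfrac.simps) simp
  also have "\<dots> = of_int (QQ n (Suc a)) / of_int (QQ n (Suc (Suc a)))"
  proof -
    have p0: "QQ n a > 0" using QQ_pos[of n, OF assms(1) step(1)] .
    have p2': "rat_of_int (QQ n a) + of_nat (n (Suc a)) * of_int (QQ n (Suc a)) > 0"
      using p1 p0 by (intro add_pos_nonneg) auto
    show ?thesis unfolding step(3) using p1 p2' by (simp add: field_simps)
  qed
  finally show ?case .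
qed

lemma cf2: assumes "n 2 > 0" "a \<ge> 2"
  shows "cfrac n 2 a = of_int (HH n a) / of_int (HH n (Suc a))"
  using assms(2)
proof (induction a rule: dec_induct)
  case base
  then show ?case by (subst cfrac.simps) (simp add: numeral_2_eq_2 numeral_3_eq_3)
next
  case (step a)
  have p1: "HH n (Suc a) > 0" using HH_pos[of n, OF assms(1)] step(1) by simp
  have "cfrac n 2 (Suc a) = 1 / (of_nat (n (Suc a)) + cfrac n 2 a)"
    using step(1) by (subst cfrac.simps) simp
  also have "\<dots> = of_int (HH n (Suc a)) / of_int (HH n (Suc (Suc a)))"
  proof -
    have p0: "HH n a > 0" using HH_pos[of n, OF assms(1) step(1)] .
    have p2': "rat_of_int (HH n a) + of_nat (n (Suc a)) * of_int (HH n (Suc a)) > 0"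
      using p1 p0 by (intro add_pos_nonneg) auto
    show ?thesis unfolding step(3) using p1 p2' by (simp add: field_simps)
  qed
  finally show ?case .
qed

lemma cop_QQ: "coprime (QQ n a) (QQ n (Suc a))"
proof -
  have "HH n (Suc a) * QQ n a + (- HH n a) * QQ n (Suc a) = (-1) ^ (a+1)"
    using det[of n a] by simp
  then have "is_unit (HH n (Suc a) * QQ n a + (- HH n a) * QQ n (Suc a))" by simp
  then show ?thesis
    by (metis coprime_def dvd_add dvd_mult dvd_unit_imp_unit)
qed

lemma cop_HH: "coprime (HH n a) (HH n (Suc a))"
proof -
  have "QQ n a * HH n (Suc a) + (- QQ n (Suc a)) * HH n a = (-1) ^ (a+1)"
    using det[of n a] by (simp add: algebra_simps)
  then have "is_unit (QQ n a * HH n (Suc a) + (- QQ n (Suc a)) * HH n a)" by simp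
  then show ?thesis
    by (metis coprime_def dvd_add dvd_mult dvd_unit_imp_unit)
qed

lemma pq1: assumes "n 1 > 0" "a \<ge> 1"
  shows "pk n 1 a = QQ n a" "qk n 1 a = QQ n (Suc a)"
proof -
  have "quotient_of (cfrac n 1 a) = (QQ n a, QQ n (Suc a))"
    using cf1[of n, OF assms] qo_eq[OF QQ_pos[of n, OF assms(1)] cop_QQ] by simp
  then show "pk n 1 a = QQ n a" "qk n 1 a = QQ n (Suc a)"
    by (simp_all add: pk_def qk_def)
qed

lemma pq2: assumes "n 2 > 0" "a \<ge> 2"
  shows "pk n 2 a = HH n a" "qk n 2 a = HH n (Suc a)"
proof -
  have "quotient_of (cfrac n 2 a) = (HH n a, HH n (Suc a))"
    using cf2[of n, OF assms] qo_eq[OF HH_pos[of n, OF assms(1)] cop_HH] assms(2) by simp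
  then show "pk n 2 a = HH n a" "qk n 2 a = HH n (Suc a)"
    by (simp_all add: pk_def qk_def)
qed

lemma telesc: assumes "n 1 > 0"
  shows "(\<Sum>a=1..m. (-1) ^ (a + 1) * (1 / (of_int (QQ n a) * of_int (QQ n (Suc a)))))
     = (of_int (HH n (Suc m)) / of_int (QQ n (Suc m)) :: real)"
proof (induction m)
  case 0 then show ?case by simp
next
  case (Suc m)
  have p1: "QQ n (Suc m) > 0" "QQ n (Suc (Suc m)) > 0" using QQ_pos[of n, OF assms, of "Suc m"] QQ_pos[of n, OF assms, of "Suc (Suc m)"] by (auto simp del: QQ.simps)
  have d: "real_of_int (HH n (Suc (Suc m)) * QQ n (Suc m) - HH n (Suc m) * QQ n (Suc (Suc m)))
     = (-1) ^ (Suc m + 1)"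
    using det[of n "Suc m"] by simp
  have "(\<Sum>a=1..Suc m. (-1) ^ (a + 1) * (1 / (of_int (QQ n a) * of_int (QQ n (Suc a)))))
     = of_int (HH n (Suc m)) / of_int (QQ n (Suc m))
       + (-1) ^ (Suc m + 1) * (1 / (of_int (QQ n (Suc m)) * of_int (QQ n (Suc (Suc m)))) :: real)"
    using Suc by simp
  also have "\<dots> = of_int (HH n (Suc (Suc m))) / of_int (QQ n (Suc (Suc m)))"
    using algB[OF p1[THEN of_int_pos]] unfolding d[symmetric] by simp
  finally show ?case .
qed

theorem proposition7p7:
  fixes n :: "nat \<Rightarrow> nat" and F :: nat
  assumes "F \<ge> 1"
    and "\<forall>i\<in>{1..F}. n i > 0"
    and "n 1 \<ge> 2"
  shows "(\<Sum>a=1..F-1. (-1) ^ (a + 1) * (1 / (of_int (pk n 1 a) * of_int (qk n 1 a))))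
           + (-1) ^ (F + 1) * (1 / (of_int (pk n 1 F) * of_int (rk n F 1)))
         = (of_int (rk n F 2) / of_int (rk n F 1) :: real)"
proof -
  have n1: "n 1 > 0" using assms by simp
  have S: "(\<Sum>a=1..F-1. (-1) ^ (a + 1) * (1 / (of_int (pk n 1 a) * of_int (qk n 1 a))))
      = (\<Sum>a=1..F-1. (-1) ^ (a + 1) * (1 / (of_int (QQ n a) * of_int (QQ n (Suc a))) :: real))"
    by (rule sum.cong) (use pq1[of n, OF n1] in auto)
  have r1: "rk n F 1 = QQ n F + QQ n (Suc F)"
    using assms(1) pq1[of n, OF n1 assms(1)] by (simp add: rk_def)
  have r2: "rk n F 2 = HH n F + HH n (Suc F)"
  proof (cases "F = 1")
    case True then show ?thesis by (simp add: rk_def numeral_2_eq_2)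
  next
    case False
    then have "F \<ge> 2" using assms(1) by simp
    moreover have "n 2 > 0" using assms(2) \<open>F \<ge> 2\<close> by auto
    ultimately show ?thesis using pq2 by (simp add: rk_def)
  qed
  have Fe: "Suc (F - 1) = F" using assms(1) by simp
  have p1: "QQ n F > 0" "QQ n (Suc F) > 0" using QQ_pos[of n, OF n1] assms(1) by auto
  have d: "real_of_int (HH n (Suc F) * QQ n F - HH n F * QQ n (Suc F)) = (-1) ^ (F + 1)"
    using det[of n F] by simp
  show ?thesis
    unfolding S telesc[of n, OF n1] Fe r1 r2 pq1(1)[of n, OF n1 assms(1)]
    using p1 unfolding d[symmetric]
  proof -
    have "real_of_int (QQ n F) > 0" "real_of_int (QQ n F) + real_of_int (QQ n (Suc F)) > 0"
      using p1 by auto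
    then show "real_of_int (HH n F) / real_of_int (QQ n F) +
        real_of_int (HH n (Suc F) * QQ n F - HH n F * QQ n (Suc F)) *
        (1 / (real_of_int (QQ n F) * real_of_int (QQ n F + QQ n (Suc F)))) =
        real_of_int (HH n F + HH n (Suc F)) / real_of_int (QQ n F + QQ n (Suc F))"
      unfolding of_int_add of_int_diff of_int_mult by (rule algA)
  qed
qed

end
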